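(* Let $\Delta>0$ and $B\ge0$. Suppose outcomes are observed under a balanced $K$-cluster randomized design $\mathcal{D}(\mathcal{C})$ and the potential outcomes have the form $Y_i(\mathbf{Z})=g_i(Z_i,e_i(\mathbf{Z}))$ where for all $i$, all $Z\in\{-1,1\}$ and all $e\in[-1,1]$: $|g_i(Z,e)-g_i(Z,Z)|=0$ if $|Z-e|<\Delta$, and $|g_i(Z,e)-g_i(Z,Z)|\le B$ otherwise. Then $$\left|\mathbb{E}[\widehat\tau_{DIM}]-\tau^*\right|\le\frac{2B}{N\Delta}\cdot\frac{K}{K-1}\,\mathcal{H}(\mathcal{C}),$$ where $\tau^*=\frac1N\sum_i\big(g_i(1,1)-g_i(-1,-1)\big)$.
   Context: Setting: $N$ experimental units $[N]$, $M$ interference units $[M]$, weights $w_{is}\ge0$ with $\sum_s w_{is}>0$ for all $i$ and $\sum_i w_{is}>0$ for all $s$. For $\mathbf{Z}\in\{-1,1\}^N$: dose $d_s=\frac{\sum_i w_{is}Z_i}{\sum_i w_{is}}$, exposure $e_i(\mathbf{Z})=\frac{\sum_s w_{is}d_s}{\sum_s w_{is}}\in[-1,1]$. Balanced $K$-cluster randomized design $\mathcal{D}(\mathcal{C})$: $K\ge2$ divides $N$, $\mathcal{C}$ partitions $[N]$ into $K$ clusters of size $N/K$, $\mathcal{C}(i)$ is the cluster of $i$; $K_T$ clusters ($0<K_T<K$) chosen uniformly at random are treated ($Z_i=1$), the rest are control ($Z_i=-1$). $N_T=NK_T/K$, $N_C=N-N_T$; $\widehat\tau_{DIM}=\frac{1}{N_T}\sum_{i:Z_i=1}Y_i-\frac{1}{N_C}\sum_{i:Z_i=-1}Y_i$.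 $\mathcal{H}(\mathcal{C})=\sum_{i\in[N]}\sum_{j\in[N]\setminus\mathcal{C}(i)}\sum_{s\in[M]}\frac{w_{is}}{\sum_{s'} w_{is'}}\frac{w_{js}}{\sum_{k} w_{ks}}$. *)

theory Defs
  imports "HOL-Analysis.Analysis"
begin

text \<open>Experimental units are 0..<N, interference units 0..<M, weights w i s.
  A treatment assignment is Z :: nat => real with values in {-1,1}.\<close>

definition dose :: "nat \<Rightarrow> nat \<Rightarrow> (nat \<Rightarrow> nat \<Rightarrow> real) \<Rightarrow> (nat \<Rightarrow> real) \<Rightarrow> nat \<Rightarrow> real" where
  "dose N M w Z s = (\<Sum>i<N. w i s * Z i) / (\<Sum>i<N. w i s)"

definition exposure :: "nat \<Rightarrow> nat \<Rightarrow> (nat \<Rightarrow> nat \<Rightarrow> real) \<Rightarrow> (nat \<Rightarrow> real) \<Rightarrow> nat \<Rightarrow> real" where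
  "exposure N M w Z i = (\<Sum>s<M. w i s * dose N M w Z s) / (\<Sum>s<M. w i s)"

text \<open>A clustering is given by a labelling cl : [N] -> [K]; cluster C(i) = {j. cl j = cl i}.
  Balanced: every label class has exactly N/K elements.\<close>

definition balanced_clustering :: "nat \<Rightarrow> nat \<Rightarrow> (nat \<Rightarrow> nat) \<Rightarrow> bool" where
  "balanced_clustering N K cl \<longleftrightarrow> K \<ge> 2 \<and> K dvd N \<and> (\<forall>i<N. cl i < K) \<and>
     (\<forall>k<K. card {i\<in>{..<N}. cl i = k} = N div K)"

definition assign :: "(nat \<Rightarrow> nat) \<Rightarrow> nat set \<Rightarrow> nat \<Rightarrow> real" where
  "assign cl T i = (if cl i \<in> T then 1 else -1)"

text \<open>Support of the design D(C): all sets of K_T treated clusters (uniformly distributed).\<close>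
definition treated_sets :: "nat \<Rightarrow> nat \<Rightarrow> nat set set" where
  "treated_sets K KT = {T. T \<subseteq> {..<K} \<and> card T = KT}"

definition tau_dim :: "nat \<Rightarrow> nat \<Rightarrow> nat \<Rightarrow> (nat \<Rightarrow> real) \<Rightarrow> (nat \<Rightarrow> real) \<Rightarrow> real" where
  "tau_dim N K KT Z Y =
     (let NT = real N * real KT / real K; NC = real N - NT in
      (\<Sum>i\<in>{i\<in>{..<N}. Z i = 1}. Y i) / NT - (\<Sum>i\<in>{i\<in>{..<N}. Z i = -1}. Y i) / NC)"

definition expected_dim ::
  "nat \<Rightarrow> nat \<Rightarrow> (nat \<Rightarrow> nat \<Rightarrow> real) \<Rightarrow> nat \<Rightarrow> nat \<Rightarrow> (nat \<Rightarrow> nat) \<Rightarrow> (nat \<Rightarrow> real \<Rightarrow> real \<Rightarrow> real) \<Rightarrow> real" where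
  "expected_dim N M w K KT cl g =
     (\<Sum>T\<in>treated_sets K KT.
        tau_dim N K KT (assign cl T)
          (\<lambda>i. g i (assign cl T i) (exposure N M w (assign cl T) i)))
     / real (card (treated_sets K KT))"

definition tau_star :: "nat \<Rightarrow> (nat \<Rightarrow> real \<Rightarrow> real \<Rightarrow> real) \<Rightarrow> real" where
  "tau_star N g = (\<Sum>i<N. g i 1 1 - g i (-1) (-1)) / real N"

definition H_clust :: "nat \<Rightarrow> nat \<Rightarrow> (nat \<Rightarrow> nat \<Rightarrow> real) \<Rightarrow> (nat \<Rightarrow> nat) \<Rightarrow> real" where
  "H_clust N M w cl =
     (\<Sum>i<N. \<Sum>j\<in>{j\<in>{..<N}. cl j \<noteq> cl i}. \<Sum>s<M.
        (w i s / (\<Sum>s'<M. w i s')) * (w j s / (\<Sum>k<N. w k s)))"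

end

theory Submission
  imports Defs
begin


lemma count_in:
  assumes "finite S" "a \<in> S"
  shows "card {T. T \<subseteq> S \<and> card T = Suc k \<and> a \<in> T} = (card S - 1) choose k"
proof -
  have eq: "{T. T \<subseteq> S \<and> card T = Suc k \<and> a \<in> T} = insert a ` {U. U \<subseteq> S - {a} \<and> card U = k}"
  proof (rule set_eqI, rule iffI)
    fix T assume "T \<in> {T. T \<subseteq> S \<and> card T = Suc k \<and> a \<in> T}"
    hence T: "T \<subseteq> S" "card T = Suc k" "a \<in> T" by auto
    have "finite T" using T(1) assms(1) finite_subset by blast
    hence "card (T - {a}) = k" using T by simp
    moreover have "T = insert a (T - {a})" using T by auto
    ultimately show "T \<in> insert a ` {U. U \<subseteq> S - {a} \<and> card U = k}" using T(1) by blast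
  next
    fix T assume "T \<in> insert a ` {U. U \<subseteq> S - {a} \<and> card U = k}"
    then obtain U where U: "U \<subseteq> S - {a}" "card U = k" "T = insert a U" by auto
    have "finite U" using U(1) assms(1) finite_subset by blast
    moreover have "a \<notin> U" using U(1) by auto
    ultimately show "T \<in> {T. T \<subseteq> S \<and> card T = Suc k \<and> a \<in> T}" using U assms(2) by auto
  qed
  have inj: "inj_on (insert a) {U. U \<subseteq> S - {a} \<and> card U = k}"
    by (rule inj_onI) auto
  have "card {T. T \<subseteq> S \<and> card T = Suc k \<and> a \<in> T} = card {U. U \<subseteq> S - {a} \<and> card U = k}"
    unfolding eq by (rule card_image[OF inj])
  also have "\<dots> = card (S - {a}) choose k" using assms by (simp add: n_subsets)
  also have "card (S - {a}) = card S - 1" using assms by simp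
  finally show ?thesis .
qed

lemma expo_diff:
  fixes Z :: "nat \<Rightarrow> real"
  assumes Wpos: "(\<Sum>s<M. w i s) > 0" and Vpos: "\<And>s. s < M \<Longrightarrow> (\<Sum>j<N. w j s) > 0"
  shows "x - exposure N M w Z i =
    (\<Sum>s<M. \<Sum>j<N. (w i s / (\<Sum>s'<M. w i s')) * (w j s / (\<Sum>k<N. w k s)) * (x - Z j))"
proof -
  have inner: "(\<Sum>j<N. (w i s / (\<Sum>s'<M. w i s')) * (w j s / (\<Sum>k<N. w k s)) * (x - Z j))
      = (w i s / (\<Sum>s'<M. w i s')) * (x - dose N M w Z s)" if "s < M" for s
  proof -
    have V: "(\<Sum>k<N. w k s) \<noteq> 0" using Vpos[OF that] by simp
    have "(\<Sum>j<N. (w j s / (\<Sum>k<N. w k s)) * (x - Z j))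
        = (\<Sum>j<N. x * w j s - w j s * Z j) / (\<Sum>k<N. w k s)"
      unfolding sum_divide_distrib by (rule sum.cong) (auto simp: algebra_simps)
    also have "\<dots> = (x * (\<Sum>j<N. w j s) - (\<Sum>j<N. w j s * Z j)) / (\<Sum>k<N. w k s)"
      by (simp add: sum_subtractf sum_distrib_left)
    also have "\<dots> = x - dose N M w Z s" using V by (simp add: dose_def field_simps)
    finally have e1: "(\<Sum>j<N. (w j s / (\<Sum>k<N. w k s)) * (x - Z j)) = x - dose N M w Z s" .
    have "(\<Sum>j<N. (w i s / (\<Sum>s'<M. w i s')) * (w j s / (\<Sum>k<N. w k s)) * (x - Z j))
      = (w i s / (\<Sum>s'<M. w i s')) * (\<Sum>j<N. (w j s / (\<Sum>k<N. w k s)) * (x - Z j))"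
      by (simp only: sum_distrib_left mult.assoc)
    thus ?thesis by (simp only: e1)
  qed
  have W: "(\<Sum>s'<M. w i s') \<noteq> 0" using Wpos by simp
  have "(\<Sum>s<M. (w i s / (\<Sum>s'<M. w i s')) * (x - dose N M w Z s))
      = (\<Sum>s<M. x * w i s - w i s * dose N M w Z s) / (\<Sum>s'<M. w i s')"
    unfolding sum_divide_distrib by (rule sum.cong) (auto simp: algebra_simps)
  also have "\<dots> = (x * (\<Sum>s<M. w i s) - (\<Sum>s<M. w i s * dose N M w Z s)) / (\<Sum>s'<M. w i s')"
    by (simp add: sum_subtractf sum_distrib_left)
  also have "\<dots> = x - exposure N M w Z i" using W by (simp add: exposure_def field_simps)
  finally show ?thesis using inner by simp
qed

lemma g_bound:
  fixes g :: "nat \<Rightarrow> real \<Rightarrow> real \<Rightarrow> real" and \<Delta> B :: real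
  assumes "\<Delta> > 0" "B \<ge> 0"
    and g_close: "\<And>i z e. i < N \<Longrightarrow> z \<in> {-1, 1} \<Longrightarrow> e \<in> {-1..1} \<Longrightarrow>
                   \<bar>z - e\<bar> < \<Delta> \<Longrightarrow> \<bar>g i z e - g i z z\<bar> = 0"
    and g_far: "\<And>i z e. i < N \<Longrightarrow> z \<in> {-1, 1} \<Longrightarrow> e \<in> {-1..1} \<Longrightarrow>
                   \<not> \<bar>z - e\<bar> < \<Delta> \<Longrightarrow> \<bar>g i z e - g i z z\<bar> \<le> B"
    and "i < N" "z \<in> {-1, 1}" "e \<in> {-1..1}"
  shows "\<bar>g i z e - g i z z\<bar> \<le> B * \<bar>z - e\<bar> / \<Delta>"
proof (cases "\<bar>z - e\<bar> < \<Delta>")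
  case True
  then show ?thesis using g_close[OF assms(5-7)] assms(1,2) by simp
next
  case False
  have "B \<le> B * \<bar>z - e\<bar> / \<Delta>" using False assms(1,2)
    by (simp add: field_simps mult_left_mono)
  then show ?thesis using g_far[OF assms(5-7) False] by linarith
qed

lemma cnt_in:
  assumes "a < K" "0 < KT"
  shows "card {T \<in> treated_sets K KT. a \<in> T} = (K - 1) choose (KT - 1)"
proof -
  have "{T \<in> treated_sets K KT. a \<in> T} = {T. T \<subseteq> {..<K} \<and> card T = Suc (KT - 1) \<and> a \<in> T}"
    using assms by (auto simp: treated_sets_def)
  thus ?thesis using count_in[of "{..<K}" a "KT - 1"] assms by simp
qed

lemma cnt_in_out:
  assumes "a < K" "b < K" "a \<noteq> b" "0 < KT"
  shows "card {T \<in> treated_sets K KT. a \<in> T \<and> b \<notin> T} = (K - 2) choose (KT - 1)"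
proof -
  have "{T \<in> treated_sets K KT. a \<in> T \<and> b \<notin> T} = {T. T \<subseteq> {..<K} - {b} \<and> card T = Suc (KT - 1) \<and> a \<in> T}"
    using assms by (auto simp: treated_sets_def)
  moreover have "card ({..<K} - {b}) - 1 = K - 2" using assms by simp
  ultimately show ?thesis using count_in[of "{..<K} - {b}" a "KT - 1"] assms by simp
qed

lemma card_TS: "card (treated_sets K KT) = K choose KT"
  unfolding treated_sets_def using n_subsets[of "{..<K}" KT] by simp

lemma fin_TS: "finite (treated_sets K KT)"
  unfolding treated_sets_def by (rule finite_subset[of _ "Pow {..<K}"]) auto

lemma r1: assumes "0 < KT" "KT < K"
  shows "real ((K - 1) choose (KT - 1)) * real K = real (K choose KT) * real KT"
proof -
  have "Suc (K - 1) * ((K - 1) choose (KT - 1)) = (Suc (K - 1) choose Suc (KT - 1)) * Suc (KT - 1)"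
    by (rule Suc_times_binomial_eq)
  moreover have "Suc (K - 1) = K" "Suc (KT - 1) = KT" using assms by auto
  ultimately have "K * ((K - 1) choose (KT - 1)) = (K choose KT) * KT" by simp
  hence "real (K * ((K - 1) choose (KT - 1))) = real ((K choose KT) * KT)" by simp
  thus ?thesis by (simp add: mult.commute)
qed

lemma r2: assumes "0 < KT" "KT < K"
  shows "real ((K - 2) choose (KT - 1)) * (real K - 1) = (real K - real KT) * real ((K - 1) choose (KT - 1))"
proof -
  have "(K - 1 - (KT - 1)) * ((K - 1) choose (KT - 1)) = (K - 1) * ((K - 1 - 1) choose (KT - 1))"
    by (rule binomial_absorb_comp)
  moreover have "K - 1 - (KT - 1) = K - KT" "K - 1 - 1 = K - 2" using assms by auto
  ultimately have "(K - KT) * ((K - 1) choose (KT - 1)) = (K - 1) * ((K - 2) choose (KT - 1))" by simp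
  hence "real ((K - KT) * ((K - 1) choose (KT - 1))) = real ((K - 1) * ((K - 2) choose (KT - 1)))" by simp
  thus ?thesis using assms by (simp add: of_nat_diff mult.commute)
qed



lemma arith_b0:
  fixes d e x y n c :: real
  assumes "d > 0" "e > 0" "x > 0" "y > 0" "n > 0"
  shows "(d * (c * y) / (x * e)) * (2 / (n * d / x)) = 2 * c * y / (n * e)"
    and "(d * (c * y) / (x * e)) * (2 / (n * y / x)) = 2 * c * d / (n * e)"
  using assms by (simp_all add: field_simps)

lemma arith_q:
  fixes x y n c :: real
  assumes "x - 1 > 0" "x - y > 0" "y > 0" "n > 0"
  shows "((x - y) * (c * y) / (x * (x - 1))) * (2 / (n * y / x))
       + ((x - y) * (c * y) / (x * (x - 1))) * (2 / (n * (x - y) / x)) = c * (2 * x / (n * (x - 1)))"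
proof -
  have x: "x > 0" using assms by simp
  note ab = arith_b0[OF assms(2) assms(1) x assms(3) assms(4), of c]
  have "2 * c * (x - y) / (n * (x - 1)) + 2 * c * y / (n * (x - 1)) = c * (2 * x / (n * (x - 1)))"
    by (simp add: add_divide_distrib[symmetric] algebra_simps)
  thus ?thesis using ab by simp
qed

lemma sum_if_const:
  fixes u v :: real
  assumes "finite A"
  shows "(\<Sum>x\<in>A. if P x then u else v) = real (card {x\<in>A. P x}) * u + real (card {x\<in>A. \<not> P x}) * v"
proof -
  have "(\<Sum>x\<in>A. if P x then u else v) = (\<Sum>x\<in>A \<inter> {x. P x}. u) + (\<Sum>x\<in>A \<inter> - {x. P x}. v)"
    using assms by (rule sum.If_cases)
  moreover have "A \<inter> {x. P x} = {x\<in>A. P x}" "A \<inter> - {x. P x} = {x\<in>A. \<not> P x}" by auto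
  ultimately show ?thesis by simp
qed

lemma sum_if_zero:
  fixes u :: real
  assumes "finite A"
  shows "(\<Sum>x\<in>A. if P x then u else 0) = real (card {x\<in>A. P x}) * u"
  using sum_if_const[OF assms, of P u 0] by simp

theorem lemma4:
  fixes N M K KT :: nat and w :: "nat \<Rightarrow> nat \<Rightarrow> real" and cl :: "nat \<Rightarrow> nat"
    and g :: "nat \<Rightarrow> real \<Rightarrow> real \<Rightarrow> real" and \<Delta> B :: real
  assumes "N > 0" and "M > 0"
    and w_nonneg: "\<And>i s. i < N \<Longrightarrow> s < M \<Longrightarrow> w i s \<ge> 0"
    and w_row: "\<And>i. i < N \<Longrightarrow> (\<Sum>s<M. w i s) > 0"
    and w_col: "\<And>s. s < M \<Longrightarrow> (\<Sum>i<N. w i s) > 0"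
    and bal: "balanced_clustering N K cl"
    and KT: "0 < KT" "KT < K"
    and "\<Delta> > 0" and "B \<ge> 0"
    and g_close: "\<And>i z e. i < N \<Longrightarrow> z \<in> {-1, 1} \<Longrightarrow> e \<in> {-1..1} \<Longrightarrow>
                   \<bar>z - e\<bar> < \<Delta> \<Longrightarrow> \<bar>g i z e - g i z z\<bar> = 0"
    and g_far: "\<And>i z e. i < N \<Longrightarrow> z \<in> {-1, 1} \<Longrightarrow> e \<in> {-1..1} \<Longrightarrow>
                   \<not> \<bar>z - e\<bar> < \<Delta> \<Longrightarrow> \<bar>g i z e - g i z z\<bar> \<le> B"
  shows "\<bar>expected_dim N M w K KT cl g - tau_star N g\<bar>
           \<le> 2 * B / (real N * \<Delta>) * (real K / (real K - 1)) * H_clust N M w cl"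
proof -
  from bal have K2: "K \<ge> 2" and clK: "\<And>i. i < N \<Longrightarrow> cl i < K"
    by (auto simp: balanced_clustering_def)
  define TS where "TS = treated_sets K KT"
  have finTS: "finite TS" unfolding TS_def by (rule fin_TS)
  define c where "c = card TS"
  have c_eq: "c = K choose KT" unfolding c_def TS_def by (rule card_TS)
  have cpos: "real c > 0" using c_eq KT by simp
  define p1 where "p1 = (K - 1) choose (KT - 1)"
  define q where "q = (K - 2) choose (KT - 1)"
  have cnt1: "card {T \<in> TS. a \<in> T} = p1" if "a < K" for a
    unfolding TS_def p1_def using cnt_in[OF that KT(1)] .
  have cnt0: "real (card {T \<in> TS. a \<notin> T}) = real c - real p1" if "a < K" for a
  proof -
    have "TS = {T \<in> TS. a \<in> T} \<union> {T \<in> TS. a \<notin> T}" by auto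
    hence "card TS = card {T \<in> TS. a \<in> T} + card {T \<in> TS. a \<notin> T}"
      using finTS by (metis (no_types, lifting) card_Un_disjoint disjoint_iff finite_Un mem_Collect_eq)
    thus ?thesis using cnt1[OF that] unfolding c_def by simp
  qed
  have cnt2: "card {T \<in> TS. a \<in> T \<and> b \<notin> T} = q" if "a < K" "b < K" "a \<noteq> b" for a b
    unfolding TS_def q_def using cnt_in_out[OF that KT(1)] .
  have R1: "real p1 * real K = real c * real KT" unfolding p1_def c_eq using r1[OF KT] .
  have R2: "real q * (real K - 1) = (real K - real KT) * real p1" unfolding p1_def q_def using r2[OF KT] .
  define NT where "NT = real N * real KT / real K"
  define NC where "NC = real N - NT"
  have NC': "NC = real N * (real K - real KT) / real K" unfolding NC_def NT_def using KT
    by (simp add: field_simps)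
  have NTpos: "NT > 0" unfolding NT_def using KT \<open>N > 0\<close> by simp
  have NCpos: "NC > 0" unfolding NC' using KT \<open>N > 0\<close> by simp
  define Z where "Z T = assign cl T" for T
  define E where "E T i = exposure N M w (Z T) i" for T i
  define h where "h T i = (if cl i \<in> T then g i 1 (E T i) / NT else - g i (-1) (E T i) / NC)" for T i
  define D where "D T i = (if cl i \<in> T then (g i 1 (E T i) - g i 1 1) / NT
                           else - (g i (-1) (E T i) - g i (-1) (-1)) / NC)" for T i
  define a where "a i j s = (w i s / (\<Sum>s'<M. w i s')) * (w j s / (\<Sum>k<N. w k s))" for i j s
  define J where "J i = {j \<in> {..<N}. cl j \<noteq> cl i}" for i
  define \<rho> where "\<rho> = 2 * real K / (real N * (real K - 1))"
  have tau: "tau_dim N K KT (Z T) (\<lambda>i. g i (Z T i) (E T i)) = (\<Sum>i<N. h T i)" for T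
  proof -
    have s1: "{i \<in> {..<N}. Z T i = 1} = {i \<in> {..<N}. cl i \<in> T}" by (auto simp: Z_def assign_def)
    have s2: "{i \<in> {..<N}. Z T i = -1} = {i \<in> {..<N}. cl i \<notin> T}" by (auto simp: Z_def assign_def)
    have "tau_dim N K KT (Z T) (\<lambda>i. g i (Z T i) (E T i))
       = (\<Sum>i\<in>{i \<in> {..<N}. cl i \<in> T}. g i (Z T i) (E T i)) / NT
         - (\<Sum>i\<in>{i \<in> {..<N}. cl i \<notin> T}. g i (Z T i) (E T i)) / NC"
      unfolding tau_dim_def Let_def s1 s2 NC_def NT_def ..
    also have "(\<Sum>i\<in>{i \<in> {..<N}. cl i \<in> T}. g i (Z T i) (E T i))
        = (\<Sum>i\<in>{i \<in> {..<N}. cl i \<in> T}. g i 1 (E T i))"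
      by (rule sum.cong) (auto simp: Z_def assign_def)
    also have "(\<Sum>i\<in>{i \<in> {..<N}. cl i \<notin> T}. g i (Z T i) (E T i))
        = (\<Sum>i\<in>{i \<in> {..<N}. cl i \<notin> T}. g i (-1) (E T i))"
      by (rule sum.cong) (auto simp: Z_def assign_def)
    also have "(\<Sum>i\<in>{i \<in> {..<N}. cl i \<in> T}. g i 1 (E T i)) / NT
         - (\<Sum>i\<in>{i \<in> {..<N}. cl i \<notin> T}. g i (-1) (E T i)) / NC
       = (\<Sum>i<N. if cl i \<in> T then g i 1 (E T i) / NT else 0)
         - (\<Sum>i<N. if cl i \<notin> T then g i (-1) (E T i) / NC else 0)"
      by (simp only: sum_divide_distrib sum.inter_filter[OF finite_lessThan]) (simp add: if_distrib[of "\<lambda>x. x / _"] cong: if_cong)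
    also have "\<dots> = (\<Sum>i<N. h T i)"
      unfolding sum_subtractf[symmetric] by (rule sum.cong) (auto simp: h_def)
    finally show ?thesis .
  qed
  have ed: "expected_dim N M w K KT cl g = (\<Sum>i<N. (\<Sum>T\<in>TS. h T i) / real c)"
  proof -
    have "\<And>T. tau_dim N K KT (assign cl T) (\<lambda>i. g i (assign cl T i) (exposure N M w (assign cl T) i))
       = (\<Sum>i<N. h T i)" using tau by (simp add: Z_def E_def)
    hence "expected_dim N M w K KT cl g = (\<Sum>T\<in>TS. \<Sum>i<N. h T i) / real c"
      unfolding expected_dim_def TS_def[symmetric] c_def by simp
    also have "\<dots> = (\<Sum>i<N. (\<Sum>T\<in>TS. h T i) / real c)"
      by (subst sum.swap) (simp add: sum_divide_distrib)
    finally show ?thesis .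
  qed
  have hi: "(\<Sum>T\<in>TS. h T i) / real c = (\<Sum>T\<in>TS. D T i) / real c + (g i 1 1 - g i (-1) (-1)) / real N"
    if "i < N" for i
  proof -
    have k: "cl i < K" using clK[OF that] .
    have "(\<Sum>T\<in>TS. h T i) = (\<Sum>T\<in>TS. D T i + (if cl i \<in> T then g i 1 1 / NT else - g i (-1) (-1) / NC))"
      by (rule sum.cong) (auto simp: h_def D_def diff_divide_distrib)
    also have "\<dots> = (\<Sum>T\<in>TS. D T i) + (\<Sum>T\<in>TS. if cl i \<in> T then g i 1 1 / NT else - g i (-1) (-1) / NC)"
      by (rule sum.distrib)
    also have "(\<Sum>T\<in>TS. if cl i \<in> T then g i 1 1 / NT else - g i (-1) (-1) / NC)
       = real p1 * (g i 1 1 / NT) + (real c - real p1) * (- g i (-1) (-1) / NC)"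
      unfolding sum_if_const[OF finTS] cnt1[OF k] cnt0[OF k] ..
    also have "real p1 * (g i 1 1 / NT) = g i 1 1 * (real p1 / NT)" by simp
    also have "real p1 / NT = real c / real N"
      unfolding NT_def using R1 KT \<open>N > 0\<close> by (simp add: field_simps)
    also have "(real c - real p1) * (- g i (-1) (-1) / NC) = - g i (-1) (-1) * ((real c - real p1) / NC)" by simp
    also have "(real c - real p1) / NC = real c / real N"
      unfolding NC' using R1 KT \<open>N > 0\<close> by (simp add: field_simps)
    finally show ?thesis using cpos \<open>N > 0\<close> by (simp add: field_simps)
  qed
  have ts: "tau_star N g = (\<Sum>i<N. (g i 1 1 - g i (-1) (-1)) / real N)"
    unfolding tau_star_def by (simp add: sum_divide_distrib)
  have diff: "expected_dim N M w K KT cl g - tau_star N g = (\<Sum>i<N. (\<Sum>T\<in>TS. D T i) / real c)"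
    unfolding ed ts sum_subtractf[symmetric] by (rule sum.cong) (simp_all add: hi)
  have Dbound: "(\<Sum>T\<in>TS. \<bar>D T i\<bar>) \<le> real c * (B / \<Delta> * \<rho>) * (\<Sum>j\<in>J i. \<Sum>s<M. a i j s)"
    if "i < N" for i
  proof -
    define r where "r T = (if cl i \<in> T then 1 / NT else 1 / NC)" for T
    have anon: "a i j s \<ge> 0" if "j < N" "s < M" for j s
      unfolding a_def using w_nonneg[OF \<open>i < N\<close> that(2)] w_nonneg[OF that] w_row[OF \<open>i < N\<close>] w_col[OF that(2)]
      by simp
    have Zval: "Z T j \<in> {-1, 1}" for T j by (simp add: Z_def assign_def)
    have rpos: "r T \<ge> 0" for T using NTpos NCpos by (simp add: r_def)
    have perT: "\<bar>D T i\<bar> \<le> B / \<Delta> * (\<Sum>j\<in>J i. \<Sum>s<M. a i j s * (\<bar>Z T i - Z T j\<bar> * r T))" for T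
    proof -
      have ed: "x - E T i = (\<Sum>s<M. \<Sum>j<N. a i j s * (x - Z T j))" for x
        unfolding E_def a_def by (rule expo_diff[OF w_row[OF \<open>i < N\<close>] w_col])
      have "0 \<le> (\<Sum>s<M. \<Sum>j<N. a i j s * (1 - Z T j))"
        by (intro sum_nonneg mult_nonneg_nonneg) (auto simp: anon Z_def assign_def)
      hence e1: "E T i \<le> 1" using ed[of 1] by simp
      have "(\<Sum>s<M. \<Sum>j<N. a i j s * (-1 - Z T j)) \<le> 0"
        by (intro sum_nonpos mult_nonneg_nonpos) (auto simp: anon Z_def assign_def)
      hence e2: "-1 \<le> E T i" using ed[of "-1"] by simp
      have eI: "E T i \<in> {-1..1}" using e1 e2 by simp
      have "\<bar>Z T i - E T i\<bar> \<le> (\<Sum>s<M. \<bar>\<Sum>j<N. a i j s * (Z T i - Z T j)\<bar>)"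
        unfolding ed by (rule sum_abs)
      also have "\<dots> \<le> (\<Sum>s<M. \<Sum>j<N. \<bar>a i j s * (Z T i - Z T j)\<bar>)"
        by (intro sum_mono sum_abs)
      also have "\<dots> = (\<Sum>j<N. \<Sum>s<M. a i j s * \<bar>Z T i - Z T j\<bar>)"
        by (subst sum.swap) (intro sum.cong refl, simp add: abs_mult anon)
      also have "\<dots> = (\<Sum>j<N. if cl j \<noteq> cl i then (\<Sum>s<M. a i j s * \<bar>Z T i - Z T j\<bar>) else 0)"
        by (rule sum.cong) (auto simp: Z_def assign_def)
      also have "\<dots> = (\<Sum>j\<in>J i. \<Sum>s<M. a i j s * \<bar>Z T i - Z T j\<bar>)"
        unfolding J_def by (simp only: sum.inter_filter[OF finite_lessThan])
      finally have zb: "\<bar>Z T i - E T i\<bar> \<le> (\<Sum>j\<in>J i. \<Sum>s<M. a i j s * \<bar>Z T i - Z T j\<bar>)" .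
      have gb: "\<bar>g i (Z T i) (E T i) - g i (Z T i) (Z T i)\<bar> \<le> B * \<bar>Z T i - E T i\<bar> / \<Delta>"
        by (rule g_bound[OF \<open>\<Delta> > 0\<close> \<open>B \<ge> 0\<close> g_close g_far \<open>i < N\<close> Zval eI])
      have Deq: "\<bar>D T i\<bar> = \<bar>g i (Z T i) (E T i) - g i (Z T i) (Z T i)\<bar> * r T"
        using NTpos NCpos by (auto simp: D_def r_def Z_def assign_def abs_minus_commute)
      have "\<bar>D T i\<bar> \<le> B * \<bar>Z T i - E T i\<bar> / \<Delta> * r T"
        unfolding Deq by (rule mult_right_mono[OF gb rpos])
      also have "\<dots> = B / \<Delta> * (\<bar>Z T i - E T i\<bar> * r T)" by simp
      also have "\<dots> \<le> B / \<Delta> * ((\<Sum>j\<in>J i. \<Sum>s<M. a i j s * \<bar>Z T i - Z T j\<bar>) * r T)"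
        using \<open>B \<ge> 0\<close> \<open>\<Delta> > 0\<close> by (intro mult_left_mono mult_right_mono zb rpos) auto
      also have "\<dots> = B / \<Delta> * (\<Sum>j\<in>J i. \<Sum>s<M. a i j s * (\<bar>Z T i - Z T j\<bar> * r T))"
        by (simp add: sum_distrib_right mult.assoc)
      finally show ?thesis .
    qed
    have pair: "(\<Sum>T\<in>TS. \<bar>Z T i - Z T j\<bar> * r T) = real c * \<rho>" if "j \<in> J i" for j
    proof -
      have j: "j < N" "cl j \<noteq> cl i" using that by (auto simp: J_def)
      have "(\<Sum>T\<in>TS. \<bar>Z T i - Z T j\<bar> * r T)
          = (\<Sum>T\<in>TS. (if cl i \<in> T \<and> cl j \<notin> T then 2 / NT else 0) + (if cl j \<in> T \<and> cl i \<notin> T then 2 / NC else 0))"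
        by (rule sum.cong) (auto simp: Z_def assign_def r_def)
      also have "\<dots> = real q * (2 / NT) + real q * (2 / NC)"
        unfolding sum.distrib sum_if_zero[OF finTS]
        using cnt2[OF clK[OF \<open>i < N\<close>] clK[OF j(1)] j(2)[symmetric]] cnt2[OF clK[OF j(1)] clK[OF \<open>i < N\<close>] j(2)]
        by simp
      also have "\<dots> = real c * \<rho>"
      proof -
        have "real q * (real K * (real K - 1)) = (real q * (real K - 1)) * real K" by (simp add: algebra_simps)
        also have "\<dots> = (real K - real KT) * (real p1 * real K)" unfolding R2 by (simp add: algebra_simps)
        also have "\<dots> = (real K - real KT) * (real c * real KT)" unfolding R1 ..
        finally have Q: "real q * (real K * (real K - 1)) = (real K - real KT) * (real c * real KT)" .
        have Kr: "real K - 1 > 0" "real K - real KT > 0" "real KT > 0" "real N > 0" using K2 KT \<open>N > 0\<close> by auto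
        have qv: "real q = (real K - real KT) * (real c * real KT) / (real K * (real K - 1))"
          using Q Kr by (simp add: field_simps)
        show ?thesis unfolding NT_def NC' \<rho>_def qv by (rule arith_q[OF Kr(1-4)])
      qed
      finally show ?thesis .
    qed
    have "(\<Sum>T\<in>TS. \<bar>D T i\<bar>) \<le> (\<Sum>T\<in>TS. B / \<Delta> * (\<Sum>j\<in>J i. \<Sum>s<M. a i j s * (\<bar>Z T i - Z T j\<bar> * r T)))"
      by (rule sum_mono) (rule perT)
    also have "\<dots> = B / \<Delta> * (\<Sum>j\<in>J i. \<Sum>s<M. a i j s * (\<Sum>T\<in>TS. \<bar>Z T i - Z T j\<bar> * r T))"
    proof -
      have "(\<Sum>T\<in>TS. B / \<Delta> * (\<Sum>j\<in>J i. \<Sum>s<M. a i j s * (\<bar>Z T i - Z T j\<bar> * r T)))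
        = B / \<Delta> * (\<Sum>T\<in>TS. \<Sum>j\<in>J i. \<Sum>s<M. a i j s * (\<bar>Z T i - Z T j\<bar> * r T))"
        by (rule sum_distrib_left[symmetric])
      also have "\<dots> = B / \<Delta> * (\<Sum>j\<in>J i. \<Sum>s<M. \<Sum>T\<in>TS. a i j s * (\<bar>Z T i - Z T j\<bar> * r T))"
        by (simp only: sum.swap[of _ TS "J i"] sum.swap[of _ TS "{..<M}"])
      also have "\<dots> = B / \<Delta> * (\<Sum>j\<in>J i. \<Sum>s<M. a i j s * (\<Sum>T\<in>TS. \<bar>Z T i - Z T j\<bar> * r T))"
        by (simp only: sum_distrib_left)
      finally show ?thesis .
    qed
    also have "\<dots> = B / \<Delta> * (\<Sum>j\<in>J i. \<Sum>s<M. a i j s * (real c * \<rho>))"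
      by (intro arg_cong[where f="\<lambda>x. B / \<Delta> * x"] sum.cong refl) (simp add: pair)
    also have "\<dots> = real c * (B / \<Delta> * \<rho>) * (\<Sum>j\<in>J i. \<Sum>s<M. a i j s)"
      by (simp add: sum_distrib_left sum_distrib_right sum_divide_distrib ac_simps)
    finally show ?thesis .
  qed
  have "\<bar>expected_dim N M w K KT cl g - tau_star N g\<bar> \<le> (\<Sum>i<N. \<bar>(\<Sum>T\<in>TS. D T i) / real c\<bar>)"
    unfolding diff by (rule sum_abs)
  also have "\<dots> \<le> (\<Sum>i<N. (B / \<Delta> * \<rho>) * (\<Sum>j\<in>J i. \<Sum>s<M. a i j s))"
  proof (rule sum_mono)
    fix i assume "i \<in> {..<N}"
    hence i: "i < N" by simp
    have "\<bar>(\<Sum>T\<in>TS. D T i) / real c\<bar> \<le> (\<Sum>T\<in>TS. \<bar>D T i\<bar>) / real c"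
      using cpos by (simp add: divide_right_mono sum_abs)
    also have "\<dots> \<le> (B / \<Delta> * \<rho>) * (\<Sum>j\<in>J i. \<Sum>s<M. a i j s)"
    proof -
      have "real c * (B / \<Delta> * \<rho>) * (\<Sum>j\<in>J i. \<Sum>s<M. a i j s)
          = (B / \<Delta> * \<rho>) * (\<Sum>j\<in>J i. \<Sum>s<M. a i j s) * real c" by (simp only: ac_simps)
      thus ?thesis using Dbound[OF i] by (simp only: pos_divide_le_eq[OF cpos])
    qed
    finally show "\<bar>(\<Sum>T\<in>TS. D T i) / real c\<bar> \<le> (B / \<Delta> * \<rho>) * (\<Sum>j\<in>J i. \<Sum>s<M. a i j s)" .
  qed
  also have "\<dots> = (B / \<Delta> * \<rho>) * H_clust N M w cl"
    unfolding H_clust_def a_def J_def sum_distrib_left by simp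
  also have "B / \<Delta> * \<rho> = 2 * B / (real N * \<Delta>) * (real K / (real K - 1))"
    unfolding \<rho>_def using K2 by (simp add: field_simps)
  finally show ?thesis .
qed

end
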